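(* Let $\mathfrak g\subset\mathfrak{gl}(V,V_* )$ be a subalgebra which is a union of reductive subalgebras, i.e. $\mathfrak g=\bigcup_n\mathfrak g_n$ for nested finite-dimensional reductive Lie algebras $\mathfrak g_n\subset\mathfrak g_{n+1}$. Then the linear nilradical $\mathfrak n_{\mathfrak g}$ is contained in the center $\mathfrak z(\mathfrak g)$ of $\mathfrak g$.
   Context: Ground field $\mathbb C$. $V$, $V_*$ are countable-dimensional vector spaces with a nondegenerate pairing $V\times V_*\to\mathbb C$; $\mathfrak{gl}(V,V_* )=V\otimes V_*$ with bracket coming from the associative product $(v\otimes w)(v'\otimes w')=\langle v',w\rangle v\otimes w'$, acting on $V$ by $(v\otimes w)u=\langle u,w\rangle v$. The locally solvable radical of a locally finite Lie algebra is its largest locally solvable ideal (locally solvable: every finite subset lies in a finite-dimensional solvable subalgebra). For $\mathfrak g\subset\mathfrak{gl}(V,V_* )$ the linear nilradical $\mathfrak n_{\mathfrak g}$ is the set of elements of the locally solvable radical of $\mathfrak g$ which are nilpotent endomorphisms of $V$. *)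

theory Defs
  imports Complex_Main "HOL-Library.Function_Algebras" "HOL-Library.Countable_Set"
begin

text \<open>Elements of gl(V,V_*) = V (x) V_* are
  identified with the endomorphisms u |-> sum_i pair u (w_i) v_i of V that they
  define (this identification is injective by nondegeneracy); the associative
  product of gl(V,V_*) becomes composition and the Lie bracket becomes the
  commutator of endomorphisms.\<close>

definition escale :: "(complex \<Rightarrow> 'v \<Rightarrow> 'v) \<Rightarrow> complex \<Rightarrow> ('v \<Rightarrow> 'v) \<Rightarrow> ('v \<Rightarrow> 'v)" where
  "escale sc c f = (\<lambda>u. sc c (f u))"

definition comm :: "('v::ab_group_add \<Rightarrow> 'v) \<Rightarrow> ('v \<Rightarrow> 'v) \<Rightarrow> ('v \<Rightarrow> 'v)" where
  "comm f g = (\<lambda>u. f (g u) - g (f u))"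

definition countable_dimensional :: "(complex \<Rightarrow> 'a::ab_group_add \<Rightarrow> 'a) \<Rightarrow> bool" where
  "countable_dimensional s \<longleftrightarrow>
     (\<exists>B. countable B \<and> infinite B \<and> \<not> module.dependent s B \<and> module.span s B = UNIV)"

definition nondegenerate_pairing :: "('v::zero \<Rightarrow> 'w::zero \<Rightarrow> complex) \<Rightarrow> bool" where
  "nondegenerate_pairing p \<longleftrightarrow>
     (\<forall>v. (\<forall>w. p v w = 0) \<longrightarrow> v = 0) \<and> (\<forall>w. (\<forall>v. p v w = 0) \<longrightarrow> w = 0)"

definition bilinear_pairing ::
  "(complex \<Rightarrow> 'v::ab_group_add \<Rightarrow> 'v) \<Rightarrow> (complex \<Rightarrow> 'w::ab_group_add \<Rightarrow> 'w) \<Rightarrow> ('v \<Rightarrow> 'w \<Rightarrow> complex) \<Rightarrow> bool" where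
  "bilinear_pairing sc scw p \<longleftrightarrow>
     (\<forall>x y w. p (x + y) w = p x w + p y w) \<and> (\<forall>c x w. p (sc c x) w = c * p x w) \<and>
     (\<forall>v x y. p v (x + y) = p v x + p v y) \<and> (\<forall>c v x. p v (scw c x) = c * p v x)"

definition glVV :: "(complex \<Rightarrow> 'v::ab_group_add \<Rightarrow> 'v) \<Rightarrow> ('v \<Rightarrow> 'w \<Rightarrow> complex) \<Rightarrow> ('v \<Rightarrow> 'v) set" where
  "glVV sc p = {f. \<exists>(n::nat) v w. f = (\<lambda>u. \<Sum>i<n. sc (p u (w i)) (v i))}"

definition lie_subalgebra :: "(complex \<Rightarrow> 'v::ab_group_add \<Rightarrow> 'v) \<Rightarrow> ('v \<Rightarrow> 'v) set \<Rightarrow> bool" where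
  "lie_subalgebra sc L \<longleftrightarrow> module.subspace (escale sc) L \<and> (\<forall>x\<in>L. \<forall>y\<in>L. comm x y \<in> L)"

definition lie_ideal :: "(complex \<Rightarrow> 'v::ab_group_add \<Rightarrow> 'v) \<Rightarrow> ('v \<Rightarrow> 'v) set \<Rightarrow> ('v \<Rightarrow> 'v) set \<Rightarrow> bool" where
  "lie_ideal sc L I \<longleftrightarrow> I \<subseteq> L \<and> module.subspace (escale sc) I \<and> (\<forall>x\<in>L. \<forall>y\<in>I. comm x y \<in> I)"

definition fin_dim :: "(complex \<Rightarrow> 'v::ab_group_add \<Rightarrow> 'v) \<Rightarrow> ('v \<Rightarrow> 'v) set \<Rightarrow> bool" where
  "fin_dim sc L \<longleftrightarrow> (\<exists>B. finite B \<and> module.span (escale sc) B = L)"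

fun derived :: "(complex \<Rightarrow> 'v::ab_group_add \<Rightarrow> 'v) \<Rightarrow> nat \<Rightarrow> ('v \<Rightarrow> 'v) set \<Rightarrow> ('v \<Rightarrow> 'v) set" where
  "derived sc 0 L = L"
| "derived sc (Suc k) L =
     module.span (escale sc) {comm x y | x y. x \<in> derived sc k L \<and> y \<in> derived sc k L}"

definition solvable :: "(complex \<Rightarrow> 'v::ab_group_add \<Rightarrow> 'v) \<Rightarrow> ('v \<Rightarrow> 'v) set \<Rightarrow> bool" where
  "solvable sc L \<longleftrightarrow> (\<exists>k. derived sc k L = {0})"

definition lie_center :: "('v::ab_group_add \<Rightarrow> 'v) set \<Rightarrow> ('v \<Rightarrow> 'v) set" where
  "lie_center L = {x \<in> L. \<forall>y\<in>L. comm x y = 0}"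

text \<open>A finite-dimensional Lie algebra is reductive iff its (solvable) radical, i.e. its
  largest solvable ideal, equals its center.\<close>
definition reductive :: "(complex \<Rightarrow> 'v::ab_group_add \<Rightarrow> 'v) \<Rightarrow> ('v \<Rightarrow> 'v) set \<Rightarrow> bool" where
  "reductive sc L \<longleftrightarrow>
     lie_ideal sc L (lie_center L) \<and> solvable sc (lie_center L) \<and>
     (\<forall>I. lie_ideal sc L I \<and> solvable sc I \<longrightarrow> I \<subseteq> lie_center L)"

definition locally_solvable :: "(complex \<Rightarrow> 'v::ab_group_add \<Rightarrow> 'v) \<Rightarrow> ('v \<Rightarrow> 'v) set \<Rightarrow> bool" where
  "locally_solvable sc L \<longleftrightarrow>
     (\<forall>F. finite F \<and> F \<subseteq> L \<longrightarrow>
        (\<exists>S. F \<subseteq> S \<and> S \<subseteq> L \<and> lie_subalgebra sc S \<and> fin_dim sc S \<and> solvable sc S))"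

definition locally_solvable_radical :: "(complex \<Rightarrow> 'v::ab_group_add \<Rightarrow> 'v) \<Rightarrow> ('v \<Rightarrow> 'v) set \<Rightarrow> ('v \<Rightarrow> 'v) set" where
  "locally_solvable_radical sc L =
     (THE R. lie_ideal sc L R \<and> locally_solvable sc R \<and>
        (\<forall>I. lie_ideal sc L I \<and> locally_solvable sc I \<longrightarrow> I \<subseteq> R))"

definition nilpotent_endo :: "('v::zero \<Rightarrow> 'v) \<Rightarrow> bool" where
  "nilpotent_endo f \<longleftrightarrow> (\<exists>k. \<forall>u. (f ^^ k) u = 0)"

definition linear_nilradical :: "(complex \<Rightarrow> 'v::ab_group_add \<Rightarrow> 'v) \<Rightarrow> ('v \<Rightarrow> 'v) set \<Rightarrow> ('v \<Rightarrow> 'v) set" where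
  "linear_nilradical sc L = {x \<in> locally_solvable_radical sc L. nilpotent_endo x}"

end

theory Submission
  imports Defs
begin

lemma vs_escale:
  assumes "vector_space sc"
  shows "vector_space (escale sc)"
proof -
  interpret V: vector_space sc by fact
  show ?thesis
    by unfold_locales
      (auto simp: escale_def fun_eq_iff V.scale_right_distrib V.scale_left_distrib)
qed

lemma glVV_linear:
  assumes vs: "vector_space sc" and bp: "bilinear_pairing sc scw p" and f: "f \<in> glVV sc p"
  shows "f (a + b) = f a + f b" "f (sc c a) = sc c (f a)" "f 0 = 0"
proof -
  interpret V: vector_space sc by fact
  have "\<exists>(n::nat) v w. f = (\<lambda>u. \<Sum>i<n. sc (p u (w i)) (v i))"
    using f by (simp add: glVV_def)
  then obtain n :: nat and v w where fe: "f = (\<lambda>u. \<Sum>i<n. sc (p u (w i)) (v i))"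
    by blast
  have p1: "p (a + b) x = p a x + p b x" for a b x using bp unfolding bilinear_pairing_def by blast
  have p2: "p (sc c a) x = c * p a x" for a c x using bp unfolding bilinear_pairing_def by blast
  show "f (a + b) = f a + f b"
    by (simp add: fe p1 V.scale_left_distrib sum.distrib)
  show "f (sc c a) = sc c (f a)"
    by (simp add: fe p2 V.scale_sum_right)
  have "p 0 x = 0" for x using p1[of 0 0 x] by simp
  then show "f 0 = 0" by (simp add: fe)
qed

lemma derived_mono:
  assumes "vector_space sc" "A \<subseteq> B"
  shows "derived sc k A \<subseteq> derived sc k B"
proof (induction k)
  case 0 then show ?case using assms by simp
next
  case (Suc k)
  interpret E: vector_space "escale sc" using vs_escale assms(1) .
  show ?case using Suc by (auto intro!: E.span_mono)
qed

lemma derived_zero: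
  assumes "vector_space sc" "0 \<in> A"
  shows "0 \<in> derived sc k A"
proof (cases k)
  case 0 then show ?thesis using assms by simp
next
  case (Suc m)
  interpret E: vector_space "escale sc" using vs_escale assms(1) .
  show ?thesis using Suc E.span_zero by simp
qed

theorem lemma2p3:
  fixes sc :: "complex \<Rightarrow> 'v::ab_group_add \<Rightarrow> 'v"
    and scw :: "complex \<Rightarrow> 'w::ab_group_add \<Rightarrow> 'w"
    and pair :: "'v \<Rightarrow> 'w \<Rightarrow> complex"
    and g :: "('v \<Rightarrow> 'v) set"
    and gn :: "nat \<Rightarrow> ('v \<Rightarrow> 'v) set"
  assumes "vector_space sc" and "vector_space scw"
    and "countable_dimensional sc" and "countable_dimensional scw"
    and "bilinear_pairing sc scw pair" and "nondegenerate_pairing pair"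
    and "g \<subseteq> glVV sc pair" and "lie_subalgebra sc g"
    and "\<And>n. lie_subalgebra sc (gn n)"
    and "\<And>n. fin_dim sc (gn n)"
    and "\<And>n. reductive sc (gn n)"
    and "\<And>n. gn n \<subseteq> gn (Suc n)"
    and "g = (\<Union>n. gn n)"
  shows "linear_nilradical sc g \<subseteq> lie_center g"
proof -
  note vs = assms(1)
  interpret E: vector_space "escale sc" using vs_escale vs .
  have gsub: "E.subspace g" using assms(8) unfolding lie_subalgebra_def by blast
  have lin: "y (a + b) = y a + y b" "y (sc c a) = sc c (y a)" "y 0 = 0" if "y \<in> g" for y a b c
    using glVV_linear[OF vs assms(5)] that assms(7) by blast+
  have mono: "m \<le> n \<Longrightarrow> gn m \<subseteq> gn n" for m n
    by (rule lift_Suc_mono_le[of gn]) (use assms(12) in auto)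
  define Z where "Z = lie_center g"
  have commsym: "comm x y = 0 \<Longrightarrow> comm y x = 0" for x y :: "'v \<Rightarrow> 'v"
    by (simp add: comm_def fun_eq_iff)
  have Zsub: "E.subspace Z"
    unfolding E.subspace_def Z_def lie_center_def
  proof (intro conjI ballI allI)
    show "0 \<in> {x \<in> g. \<forall>y\<in>g. comm x y = 0}"
      using E.subspace_0[OF gsub] lin by (auto simp: comm_def fun_eq_iff)
  next
    fix x z assume x: "x \<in> {x \<in> g. \<forall>y\<in>g. comm x y = 0}" and z: "z \<in> {x \<in> g. \<forall>y\<in>g. comm x y = 0}"
    show "x + z \<in> {x \<in> g. \<forall>y\<in>g. comm x y = 0}"
    proof (safe)
      show "x + z \<in> g" using x z E.subspace_add[OF gsub] by blast
      fix y assume y: "y \<in> g"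
      have "comm x y = 0" "comm z y = 0" using x z y by auto
      then show "comm (x + z) y = 0"
        using lin(1)[OF y] by (simp add: comm_def fun_eq_iff algebra_simps)
    qed
  next
    fix c x assume x: "x \<in> {x \<in> g. \<forall>y\<in>g. comm x y = 0}"
    show "escale sc c x \<in> {x \<in> g. \<forall>y\<in>g. comm x y = 0}"
    proof (safe)
      show "escale sc c x \<in> g" using x E.subspace_scale[OF gsub] by blast
      fix y assume y: "y \<in> g"
      have "comm x y = 0" using x y by auto
      then have "x (y u) = y (x u)" for u by (simp add: comm_def fun_eq_iff)
      then show "comm (escale sc c x) y = 0"
        using lin(2)[OF y] by (simp add: comm_def fun_eq_iff escale_def)
    qed
  qed
  have Zg: "Z \<subseteq> g" unfolding Z_def lie_center_def by blast
  have Zideal: "lie_ideal sc g Z"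
    unfolding lie_ideal_def
  proof (intro conjI Zg Zsub ballI)
    fix x y assume "x \<in> g" "y \<in> Z"
    then have "comm x y = 0" using commsym unfolding Z_def lie_center_def by blast
    then show "comm x y \<in> Z" using E.subspace_0[OF Zsub] by simp
  qed
  have Zls: "locally_solvable sc Z"
    unfolding locally_solvable_def
  proof (intro allI impI)
    fix F assume F: "finite F \<and> F \<subseteq> Z"
    define S where "S = E.span F"
    have SZ: "S \<subseteq> Z" unfolding S_def using F Zsub E.span_minimal by blast
    have c0: "x \<in> S \<Longrightarrow> y \<in> S \<Longrightarrow> comm x y = 0" for x y
      using SZ unfolding Z_def lie_center_def by blast
    have "lie_subalgebra sc S" unfolding lie_subalgebra_def S_def
      using c0 E.subspace_span[of F] unfolding S_def by (auto intro: E.span_zero)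
    moreover have "fin_dim sc S" unfolding fin_dim_def S_def using F by blast
    moreover have "derived sc 1 S = {0}"
    proof -
      have "{comm x y | x y. x \<in> S \<and> y \<in> S} = {0}"
      proof
        show "{comm x y | x y. x \<in> S \<and> y \<in> S} \<subseteq> {0}" using c0 by blast
        have "0 \<in> S" unfolding S_def by (rule E.span_zero)
        then have "comm 0 0 \<in> {comm x y | x y. x \<in> S \<and> y \<in> S}" by blast
        then show "{0} \<subseteq> {comm x y | x y. x \<in> S \<and> y \<in> S}"
          using c0[OF \<open>0 \<in> S\<close> \<open>0 \<in> S\<close>] by simp
      qed
      then show ?thesis by simp
    qed
    then have "solvable sc S" unfolding solvable_def by blast
    ultimately show "\<exists>S. F \<subseteq> S \<and> S \<subseteq> Z \<and> lie_subalgebra sc S \<and> fin_dim sc S \<and> solvable sc S"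
      using SZ F E.span_superset S_def by blast
  qed
  have Zmax: "I \<subseteq> Z" if I: "lie_ideal sc g I" "locally_solvable sc I" for I
  proof
    fix x assume xI: "x \<in> I"
    have Ig: "I \<subseteq> g" and Isub: "E.subspace I" and Icl: "\<forall>a\<in>g. \<forall>y\<in>I. comm a y \<in> I"
      using I(1) unfolding lie_ideal_def by auto
    have cent: "I \<inter> gn n \<subseteq> lie_center (gn n)" for n
    proof -
      define J where "J = I \<inter> gn n"
      have gns: "E.subspace (gn n)" using assms(9)[of n] unfolding lie_subalgebra_def by blast
      have Jsub: "E.subspace J" unfolding J_def using E.subspace_inter Isub gns by blast
      have Jid: "lie_ideal sc (gn n) J"
        unfolding lie_ideal_def
      proof (intro conjI Jsub ballI)
        show "J \<subseteq> gn n" unfolding J_def by blast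
        fix a y assume a: "a \<in> gn n" and y: "y \<in> J"
        have "a \<in> g" using a assms(13) by blast
        have "y \<in> I" "y \<in> gn n" using y unfolding J_def by auto
        have "comm a y \<in> I" using Icl \<open>a \<in> g\<close> \<open>y \<in> I\<close> by blast
        moreover have "comm a y \<in> gn n" using assms(9)[of n] a \<open>y \<in> gn n\<close> unfolding lie_subalgebra_def by blast
        ultimately show "comm a y \<in> J" unfolding J_def by blast
      qed
      have "\<exists>B. finite B \<and> E.span B = gn n" using assms(10)[of n] by (simp add: fin_dim_def)
      then obtain B where B: "finite B" "E.span B = gn n" by (elim exE conjE)
      obtain C where C: "C \<subseteq> J" "E.independent C" "J \<subseteq> E.span C" "card C = E.dim J"
        by (rule E.basis_exists[of J])
      have "C \<subseteq> E.span B" using C(1) B(2) unfolding J_def by blast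
      have "finite C" using E.independent_span_bound[OF B(1) C(2) \<open>C \<subseteq> E.span B\<close>] by blast
      moreover have "C \<subseteq> I" using C(1) unfolding J_def by blast
      ultimately have "\<exists>S. C \<subseteq> S \<and> S \<subseteq> I \<and> lie_subalgebra sc S \<and> fin_dim sc S \<and> solvable sc S"
        using I(2) unfolding locally_solvable_def by blast
      then obtain S where S: "C \<subseteq> S" "S \<subseteq> I" "lie_subalgebra sc S" "solvable sc S"
        by blast
      have "E.subspace S" using S(3) unfolding lie_subalgebra_def by blast
      then have "E.span C \<subseteq> S" by (rule E.span_minimal[OF S(1)])
      then have "J \<subseteq> S" using C(3) by (rule order_trans[rotated])
      obtain k where k: "derived sc k S = {0}" using S(4) unfolding solvable_def by blast
      have "derived sc k J = {0}"
        using derived_mono[OF vs \<open>J \<subseteq> S\<close>, of k] k derived_zero[OF vs E.subspace_0[OF Jsub], of k]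
        by blast
      then have "solvable sc J" unfolding solvable_def by blast
      have "\<forall>I. lie_ideal sc (gn n) I \<and> solvable sc I \<longrightarrow> I \<subseteq> lie_center (gn n)"
        using assms(11)[of n] unfolding reductive_def by blast
      then have "J \<subseteq> lie_center (gn n)" using Jid \<open>solvable sc J\<close> by blast
      then show ?thesis unfolding J_def .
    qed
    have xg: "x \<in> g" using xI Ig by blast
    then obtain m where m: "x \<in> gn m" using assms(13) by blast
    have "\<forall>y\<in>g. comm x y = 0"
    proof
      fix y assume "y \<in> g"
      then obtain k where k: "y \<in> gn k" using assms(13) by blast
      let ?n = "max m k"
      have "x \<in> gn ?n" using m mono[of m ?n] by auto
      have "y \<in> gn ?n" using k mono[of k ?n] by auto
      have "x \<in> lie_center (gn ?n)" using cent[of ?n] xI \<open>x \<in> gn ?n\<close> by blast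
      then show "comm x y = 0" using \<open>y \<in> gn ?n\<close> unfolding lie_center_def by blast
    qed
    then show "x \<in> Z" using xg unfolding Z_def lie_center_def by blast
  qed
  have "locally_solvable_radical sc g = Z"
    unfolding locally_solvable_radical_def
  proof (rule the_equality)
    show "lie_ideal sc g Z \<and> locally_solvable sc Z \<and>
        (\<forall>I. lie_ideal sc g I \<and> locally_solvable sc I \<longrightarrow> I \<subseteq> Z)"
      using Zideal Zls Zmax by blast
  next
    fix R assume R: "lie_ideal sc g R \<and> locally_solvable sc R \<and>
        (\<forall>I. lie_ideal sc g I \<and> locally_solvable sc I \<longrightarrow> I \<subseteq> R)"
    then have "R \<subseteq> Z" using Zmax by blast
    moreover have "Z \<subseteq> R" using R Zideal Zls by blast
    ultimately show "R = Z" by blast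
  qed
  then show ?thesis unfolding linear_nilradical_def Z_def by blast
qed

end
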